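(* Let $T>0$, $\mu>0$, and consider a partition of $[0,T]$ with mesh-size $h$ satisfying $$h\le\frac{\pi^2}{\sqrt2\,(2+\sqrt\mu\,T)\,\mu\,T}.$$ Then for all $u_h\in V^h_{0,*}$, $$\frac{2\pi^2}{(2+\sqrt\mu T)^2(\pi^2+4\mu T^2)}\,|u_h|_{H^1(0,T)}\le\sup_{0\ne v_h\in V^h_{0,*}}\frac{a(u_h,\overline{\mathcal H}_Tv_h)}{|v_h|_{H^1(0,T)}}.$$
   Context: $H^1_{0,*}(0,T)=\{u\in H^1(0,T):u(0)=0\}$, $H^1_{*,0}(0,T)=\{v\in H^1(0,T):v(T)=0\}$, with the norm $|u|_{H^1(0,T)}=\|\partial_tu\|_{L^2(0,T)}$. The bilinear form is $a(u,v):=-\langle\partial_tu,\partial_tv\rangle_{L^2(0,T)}+\mu\langle u,v\rangle_{L^2(0,T)}$ for $u\in H^1_{0,*}$, $v\in H^1_{*,0}$, and $(\overline{\mathcal H}_Tv)(t):=v(T)-v(t)$. For a partition $0=\eta_0<\dots<\eta_{l+1}=T$ with $h=\max_i(\eta_{i+1}-\eta_i)$, $S^2_h$ is the space of $C^1([0,T])$ functions that are polynomials of degree $\le2$ on each $[\eta_i,\eta_{i+1}]$, and $V^h_{0,*}:=\{v_h\in S^2_h:v_h(0)=0\}$. *)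

theory Defs
  imports "HOL-Analysis.Analysis"
begin

definition is_partition :: "real \<Rightarrow> nat \<Rightarrow> (nat \<Rightarrow> real) \<Rightarrow> bool" where
  "is_partition T l eta \<longleftrightarrow> eta 0 = 0 \<and> eta (Suc l) = T \<and> (\<forall>i\<le>l. eta i < eta (Suc i))"

definition mesh :: "nat \<Rightarrow> (nat \<Rightarrow> real) \<Rightarrow> real" where
  "mesh l eta = Max ((\<lambda>i. eta (Suc i) - eta i) ` {0..l})"

definition C1_on :: "real \<Rightarrow> (real \<Rightarrow> real) \<Rightarrow> bool" where
  "C1_on T v \<longleftrightarrow> (\<exists>v'. (\<forall>t\<in>{0..T}. (v has_real_derivative v' t) (at t within {0..T}))
                          \<and> continuous_on {0..T} v')"

definition S2h :: "real \<Rightarrow> nat \<Rightarrow> (nat \<Rightarrow> real) \<Rightarrow> (real \<Rightarrow> real) set" where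
  "S2h T l eta = {v. C1_on T v \<and>
     (\<forall>i\<le>l. \<exists>c0 c1 c2. \<forall>t\<in>{eta i..eta (Suc i)}. v t = c0 + c1 * t + c2 * t ^ 2)}"

definition Vh0 :: "real \<Rightarrow> nat \<Rightarrow> (nat \<Rightarrow> real) \<Rightarrow> (real \<Rightarrow> real) set" where
  "Vh0 T l eta = {v \<in> S2h T l eta. v 0 = 0}"

(* |u|_{H^1(0,T)} = || d/dt u ||_{L^2(0,T)}  (derivative taken in the interior) *)
definition H1semi :: "real \<Rightarrow> (real \<Rightarrow> real) \<Rightarrow> real" where
  "H1semi T u = sqrt (integral {0..T} (\<lambda>t. (deriv u t)\<^sup>2))"

definition bilin_a :: "real \<Rightarrow> real \<Rightarrow> (real \<Rightarrow> real) \<Rightarrow> (real \<Rightarrow> real) \<Rightarrow> real" where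
  "bilin_a T \<mu> u v = - integral {0..T} (\<lambda>t. deriv u t * deriv v t)
                      + \<mu> * integral {0..T} (\<lambda>t. u t * v t)"

definition HT :: "real \<Rightarrow> (real \<Rightarrow> real) \<Rightarrow> real \<Rightarrow> real" where
  "HT T v = (\<lambda>t. v T - v t)"

end

theory Submission
  imports Defs
begin

lemmas HK_combine = Henstock_Kurzweil_Integration.integral_combine
lemmas HK_nonneg = Henstock_Kurzweil_Integration.integral_nonneg

lemma icont: "continuous_on {a..b} f \<Longrightarrow> (f::real\<Rightarrow>real) integrable_on {a..b}"
  by (rule integrable_continuous_interval)

lemma int_lin3:
  fixes f g h :: "real \<Rightarrow> real"
  assumes "f integrable_on S" "g integrable_on S" "h integrable_on S"
  shows "integral S (\<lambda>t. x * f t + y * g t + z * h t) = x * integral S f + y * integral S g + z * integral S h"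
proof -
  have "integral S (\<lambda>t. x * f t + y * g t + z * h t) = integral S (\<lambda>t. x * f t + y * g t) + integral S (\<lambda>t. z * h t)"
    by (rule integral_add) (use assms in \<open>auto intro!: integrable_add integrable_on_mult_right\<close>)
  also have "integral S (\<lambda>t. x * f t + y * g t) = integral S (\<lambda>t. x * f t) + integral S (\<lambda>t. y * g t)"
    by (rule integral_add) (use assms in \<open>auto intro!: integrable_add integrable_on_mult_right\<close>)
  finally show ?thesis by simp
qed

lemma cs_int:
  fixes f g :: "real \<Rightarrow> real"
  assumes "continuous_on {a..b} f" "continuous_on {a..b} g"
  shows "(integral {a..b} (\<lambda>t. f t * g t))\<^sup>2 \<le> integral {a..b} (\<lambda>t. (f t)\<^sup>2) * integral {a..b} (\<lambda>t. (g t)\<^sup>2)"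
proof -
  define A where "A = integral {a..b} (\<lambda>t. (f t)\<^sup>2)"
  define B where "B = integral {a..b} (\<lambda>t. (g t)\<^sup>2)"
  define C where "C = integral {a..b} (\<lambda>t. f t * g t)"
  have i1: "(\<lambda>t. (f t)\<^sup>2) integrable_on {a..b}" "(\<lambda>t. (g t)\<^sup>2) integrable_on {a..b}" "(\<lambda>t. f t * g t) integrable_on {a..b}"
    using assms by (auto intro!: icont continuous_intros)
  have key: "0 \<le> x\<^sup>2 * A - 2 * x * C + B" for x
  proof -
    have "0 \<le> integral {a..b} (\<lambda>t. (x * f t - g t)\<^sup>2)"
      by (rule integral_nonneg) (use assms in \<open>auto intro!: icont continuous_intros\<close>)
    also have "integral {a..b} (\<lambda>t. (x * f t - g t)\<^sup>2) = integral {a..b} (\<lambda>t. x\<^sup>2 * (f t)\<^sup>2 + (- 2 * x) * (f t * g t) + 1 * (g t)\<^sup>2)"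
      by (rule arg_cong[where f="integral _"]) (auto simp: power2_eq_square algebra_simps)
    also have "\<dots> = x\<^sup>2 * A - 2 * x * C + B"
      unfolding A_def B_def C_def by (subst int_lin3) (use i1 in auto)
    finally show ?thesis .
  qed
  have A0: "A \<ge> 0" unfolding A_def by (rule integral_nonneg) (use i1 in auto)
  show ?thesis
  proof (cases "A = 0")
    case True
    have "C = 0"
    proof (rule ccontr)
      assume "C \<noteq> 0"
      have "0 \<le> ((B + 1) / (2 * C))\<^sup>2 * A - 2 * ((B + 1) / (2 * C)) * C + B" by (rule key)
      moreover have "2 * ((B + 1) / (2 * C)) * C = B + 1" using \<open>C \<noteq> 0\<close> by simp
      ultimately show False using True by simp
    qed
    then show ?thesis using True unfolding A_def[symmetric] C_def[symmetric] by simp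
  next
    case False
    with A0 have "A > 0" by simp
    have "0 \<le> (C/A)\<^sup>2 * A - 2 * (C/A) * C + B" by (rule key)
    hence "0 \<le> B - C\<^sup>2 / A" using \<open>A>0\<close> by (simp add: power2_eq_square field_simps)
    hence "C\<^sup>2 \<le> A * B" using \<open>A>0\<close> by (simp add: field_simps)
    then show ?thesis unfolding A_def B_def C_def .
  qed
qed

lemma ftc_real:
  fixes F F' :: "real \<Rightarrow> real"
  assumes "a \<le> b" "\<And>x. x \<in> {a..b} \<Longrightarrow> (F has_real_derivative F' x) (at x within {a..b})"
  shows "integral {a..b} F' = F b - F a"
proof -
  have "(F' has_integral (F b - F a)) {a..b}"
    by (rule fundamental_theorem_of_calculus) (use assms in \<open>auto simp: has_real_derivative_iff_has_vector_derivative[symmetric]\<close>)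
  then show ?thesis by (rule integral_unique)
qed

lemma int_prod_poly:
  fixes a b :: real
  assumes "a \<le> b"
  shows "integral {a..b} (\<lambda>t. (t - a) * (b - t)) = (b - a)^3 / 6"
proof -
  define F where "F = (\<lambda>t::real. (b-a)*(t-a)^2/2 - (t-a)^3/3)"
  have "integral {a..b} (\<lambda>t. (t - a) * (b - t)) = F b - F a"
    unfolding F_def apply (rule ftc_real[OF assms]) apply (auto intro!: derivative_eq_intros simp: field_simps power2_eq_square) done
  also have "\<dots> = (b - a)^3 / 6" by (simp add: F_def power3_eq_cube power2_eq_square field_simps)
  finally show ?thesis .
qed

lemma int_id:
  fixes a b :: real
  assumes "0 \<le> b"
  shows "integral {0..b} (\<lambda>t. t) = b^2 / 2"
proof -
  have "integral {0..b} (\<lambda>t. t) = (\<lambda>t. t^2/2) b - (\<lambda>t. t^2/2) 0"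
    by (rule ftc_real[OF assms]) (auto intro!: derivative_eq_intros)
  then show ?thesis by simp
qed

lemma int_const:
  fixes a b c :: real
  assumes "a \<le> b"
  shows "integral {a..b} (\<lambda>t. c) = c * (b - a)"
  using assms by simp

lemma le_of_delta:
  fixes E A K :: real
  assumes "K \<ge> 0" "\<And>\<delta>. \<delta> > 0 \<Longrightarrow> E \<le> A + K * sqrt \<delta>"
  shows "E \<le> A"
proof (rule ccontr)
  assume "\<not> E \<le> A"
  define g where "g = E - A"
  have g: "g > 0" using \<open>\<not> E \<le> A\<close> g_def by simp
  define d where "d = (g / (K + 1))\<^sup>2"
  have "d > 0" using g assms(1) by (simp add: d_def)
  have sd: "sqrt d = g / (K + 1)" using g assms(1) by (simp add: d_def)
  have "E \<le> A + K * (g / (K+1))" using assms(2)[OF \<open>d>0\<close>] sd by simp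
  moreover have "K * (g / (K+1)) < g" using g assms(1) by (simp add: field_simps)
  ultimately show False using g_def by simp
qed

lemma cs_one:
  fixes f :: "real \<Rightarrow> real"
  assumes "a \<le> b" "continuous_on {a..b} f"
  shows "(integral {a..b} f)\<^sup>2 \<le> (b - a) * integral {a..b} (\<lambda>t. (f t)\<^sup>2)"
proof -
  have "(integral {a..b} (\<lambda>t. f t * 1))\<^sup>2 \<le> integral {a..b} (\<lambda>t. (f t)\<^sup>2) * integral {a..b} (\<lambda>t. 1\<^sup>2)"
    by (rule cs_int) (use assms in auto)
  then show ?thesis using assms by (simp add: mult.commute)
qed

lemma int_mono_interval:
  fixes f :: "real \<Rightarrow> real"
  assumes "a \<le> c" "c \<le> b" "continuous_on {a..b} f" "\<And>t. t \<in> {a..b} \<Longrightarrow> f t \<ge> 0"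
  shows "integral {a..c} f \<le> integral {a..b} f"
proof -
  have "integral {a..c} f + integral {c..b} f = integral {a..b} f"
    by (rule HK_combine) (use assms in \<open>auto intro: icont\<close>)
  moreover have "integral {c..b} f \<ge> 0"
    by (rule integral_nonneg) (use assms in \<open>auto intro!: icont elim: continuous_on_subset\<close>)
  ultimately show ?thesis by simp
qed

lemma deriv_interior:
  assumes "(g has_real_derivative d) (at t within {a..b})" "a < t" "t < b"
  shows "(g has_real_derivative d) (at t)"
proof -
  have "t \<in> interior {a..b}" using assms by simp
  then show ?thesis using assms(1) at_within_interior by metis
qed

lemma energy:
  fixes u p :: "real \<Rightarrow> real" and T \<mu> :: real
  assumes "0 \<le> T" "\<mu> > 0" "continuous_on {0..T} p"
    and du: "\<And>t. t \<in> {0..T} \<Longrightarrow> (u has_real_derivative p t) (at t within {0..T})"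
    and u0: "u 0 = 0" and t: "t \<in> {0..T}"
  shows "(u t)\<^sup>2 + \<mu> * (integral {0..t} u)\<^sup>2 \<le> t * integral {0..T} (\<lambda>x. (p x + \<mu> * integral {0..x} u)\<^sup>2)"
proof -
  define U where "U = (\<lambda>x. integral {0..x} u)"
  define f where "f = (\<lambda>x. p x + \<mu> * U x)"
  define E where "E = (\<lambda>x. (u x)\<^sup>2 + \<mu> * (U x)\<^sup>2)"
  define F where "F = integral {0..T} (\<lambda>x. (f x)\<^sup>2)"
  have uc: "continuous_on {0..T} u" by (rule DERIV_continuous_on[OF du])
  have dU: "(U has_real_derivative u x) (at x within {0..T})" if "x \<in> {0..T}" for x
    unfolding U_def by (rule integral_has_real_derivative[OF uc that])
  have Uc: "continuous_on {0..T} U" by (rule DERIV_continuous_on[OF dU])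
  have fc: "continuous_on {0..T} f" unfolding f_def using Uc assms(3) by (auto intro!: continuous_intros)
  have t0: "0 \<le> t" "t \<le> T" using t by auto
  have F0: "F \<ge> 0" unfolding F_def by (rule HK_nonneg, rule icont) (use fc in \<open>auto intro!: continuous_intros\<close>)
  have main: "E t \<le> t * F + 2 * sqrt (t * F) * sqrt \<delta>" if "\<delta> > 0" for \<delta>
  proof -
    define \<phi> where "\<phi> = (\<lambda>r. sqrt (E r + \<delta>) - integral {0..r} (\<lambda>x. \<bar>f x\<bar>))"
    have Epos: "E r \<ge> 0" for r unfolding E_def using assms(2) by auto
    have "\<phi> t \<le> \<phi> 0"
    proof (rule DERIV_nonpos_imp_decreasing_open[OF t0(1)])
      fix r assume r: "0 < r" "r < t"
      have rT: "r \<in> {0..T}" "0 < r" "r < T" using r t0 by auto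
      have d1: "(u has_real_derivative p r) (at r)" by (rule deriv_interior[OF du[OF rT(1)] rT(2,3)])
      have d2: "(U has_real_derivative u r) (at r)" by (rule deriv_interior[OF dU[OF rT(1)] rT(2,3)])
      have fac: "continuous_on {0..T} (\<lambda>x. \<bar>f x\<bar>)" using fc by (auto intro!: continuous_intros)
      have d3: "((\<lambda>r. integral {0..r} (\<lambda>x. \<bar>f x\<bar>)) has_real_derivative \<bar>f r\<bar>) (at r)"
        by (rule deriv_interior[OF integral_has_real_derivative[OF fac rT(1)] rT(2,3)])
      have Ed: "(E has_real_derivative (2 * u r * p r + \<mu> * (2 * U r * u r))) (at r)"
        unfolding E_def by (auto intro!: derivative_eq_intros d1 d2 simp: power2_eq_square)
      have sp: "E r + \<delta> > 0" using Epos[of r] that by simp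
      have sd: "((\<lambda>r. sqrt (E r + \<delta>)) has_real_derivative (2 * u r * p r + \<mu> * (2 * U r * u r)) * (inverse (sqrt (E r + \<delta>)) / 2)) (at r)"
      proof -
        have Ed': "((\<lambda>r. E r + \<delta>) has_real_derivative (2 * u r * p r + \<mu> * (2 * U r * u r))) (at r)"
          using Ed by (auto intro!: derivative_eq_intros)
        show ?thesis using DERIV_chain2[where g="\<lambda>r. E r + \<delta>", OF DERIV_real_sqrt[OF sp] Ed'] by (simp add: mult.commute)
      qed
      define y where "y = (2 * u r * p r + \<mu> * (2 * U r * u r)) * (inverse (sqrt (E r + \<delta>)) / 2) - \<bar>f r\<bar>"
      have "(\<phi> has_real_derivative y) (at r)" unfolding \<phi>_def y_def by (rule DERIV_diff[OF sd d3])
      moreover have "y \<le> 0"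
      proof -
        have y: "y = u r * f r / sqrt (E r + \<delta>) - \<bar>f r\<bar>" proof -
          have "sqrt (E r + \<delta>) > 0" using sp by simp
          then show ?thesis unfolding y_def f_def by (simp add: field_simps)
        qed
        have "\<bar>u r\<bar> \<le> sqrt (E r + \<delta>)"
          by (rule real_le_rsqrt) (use that assms(2) in \<open>auto simp: E_def\<close>)
        hence "\<bar>u r * f r\<bar> \<le> sqrt (E r + \<delta>) * \<bar>f r\<bar>" by (simp add: abs_mult mult_right_mono)
        hence "u r * f r \<le> sqrt (E r + \<delta>) * \<bar>f r\<bar>" by simp
        hence "u r * f r / sqrt (E r + \<delta>) \<le> \<bar>f r\<bar>" using sp by (simp add: divide_le_eq mult.commute)
        then show ?thesis using y by simp
      qed
      ultimately show "\<exists>y. (\<phi> has_real_derivative y) (at r) \<and> y \<le> 0" by blast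
    next
      have sub: "{0..t} \<subseteq> {0..T}" using t0 by auto
      have c1: "continuous_on {0..t} (\<lambda>r. sqrt (E r + \<delta>))" unfolding E_def
        using continuous_on_subset[OF uc sub] continuous_on_subset[OF Uc sub] by (auto intro!: continuous_intros)
      have c2: "continuous_on {0..t} (\<lambda>r. integral {0..r} (\<lambda>x. \<bar>f x\<bar>))"
        by (rule indefinite_integral_continuous_1, rule icont) (use continuous_on_subset[OF fc sub] in \<open>auto intro!: continuous_intros\<close>)
      show "continuous_on {0..t} \<phi>" unfolding \<phi>_def using c1 c2 by (auto intro!: continuous_intros)
    qed
    moreover have "E 0 = 0" unfolding E_def U_def using u0 by simp
    ultimately have A: "sqrt (E t + \<delta>) \<le> sqrt \<delta> + integral {0..t} (\<lambda>x. \<bar>f x\<bar>)" unfolding \<phi>_def by simp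
    have sub: "{0..t} \<subseteq> {0..T}" using t0 by auto
    have "(integral {0..t} (\<lambda>x. \<bar>f x\<bar>))\<^sup>2 \<le> (t - 0) * integral {0..t} (\<lambda>x. \<bar>f x\<bar>\<^sup>2)"
      by (rule cs_one) (use t0 continuous_on_subset[OF fc sub] in \<open>auto intro!: continuous_intros\<close>)
    also have "integral {0..t} (\<lambda>x. \<bar>f x\<bar>\<^sup>2) \<le> F" unfolding F_def
      by (simp, rule int_mono_interval) (use t0 fc in \<open>auto intro!: continuous_intros\<close>)
    finally have "(integral {0..t} (\<lambda>x. \<bar>f x\<bar>))\<^sup>2 \<le> t * F" using t0 by (simp add: mult_left_mono)
    hence B: "integral {0..t} (\<lambda>x. \<bar>f x\<bar>) \<le> sqrt (t * F)" by (simp add: real_le_rsqrt)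
    have I0: "integral {0..t} (\<lambda>x. \<bar>f x\<bar>) \<ge> 0"
      by (rule HK_nonneg, rule icont) (use continuous_on_subset[OF fc sub] in \<open>auto intro!: continuous_intros\<close>)
    have "F \<ge> 0" unfolding F_def by (rule HK_nonneg, rule icont) (use fc in \<open>auto intro!: continuous_intros\<close>)
    hence tF: "t * F \<ge> 0" using t0 by simp
    have "sqrt (E t + \<delta>) \<le> sqrt \<delta> + sqrt (t * F)" using A B by simp
    hence "(sqrt (E t + \<delta>))\<^sup>2 \<le> (sqrt \<delta> + sqrt (t * F))\<^sup>2"
      by (rule power_mono) (use Epos[of t] that in simp)
    also have "\<dots> = \<delta> + 2 * sqrt (t * F) * sqrt \<delta> + t * F"
      using that tF by (simp add: power2_eq_square algebra_simps)
    finally show ?thesis using Epos[of t] that by simp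
  qed
  have "E t \<le> t * F"
    by (rule le_of_delta[of "2 * sqrt (t * F)"]) (use main F0 t0 in auto)
  then show ?thesis unfolding E_def F_def f_def U_def .
qed

lemma part_mono:
  assumes "is_partition T l eta" "i \<le> j" "j \<le> Suc l"
  shows "eta i \<le> eta j"
  using assms(2,3)
proof (induction j)
  case 0 then show ?case by simp
next
  case (Suc j)
  show ?case
  proof (cases "i = Suc j")
    case True then show ?thesis by simp
  next
    case False
    then have "i \<le> j" using Suc by simp
    then have "eta i \<le> eta j" using Suc by simp
    moreover have "eta j < eta (Suc j)" using assms(1) Suc(3) unfolding is_partition_def by simp
    ultimately show ?thesis by simp
  qed
qed

lemma part_bounds:
  assumes "is_partition T l eta" "i \<le> Suc l"
  shows "0 \<le> eta i" "eta i \<le> T"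
  using part_mono[OF assms(1), of 0 i] part_mono[OF assms(1), of i "Suc l"] assms
  unfolding is_partition_def by auto

lemma part_lt:
  assumes "is_partition T l eta" "i \<le> l"
  shows "eta i < eta (Suc i)"
  using assms unfolding is_partition_def by auto

lemma mesh_ge:
  assumes "i \<le> l"
  shows "eta (Suc i) - eta i \<le> mesh l eta"
  unfolding mesh_def by (rule Max_ge) (use assms in auto)

lemma mesh_le_T:
  assumes "is_partition T l eta"
  shows "mesh l eta \<le> T"
  unfolding mesh_def
proof (subst Max_le_iff)
  have "eta (Suc i) - eta i \<le> T" if "i \<in> {0..l}" for i
  proof -
    have "eta (Suc i) \<le> T" "0 \<le> eta i" using part_bounds[OF assms, of "Suc i"] part_bounds[OF assms, of i] that by auto
    then show ?thesis by simp
  qed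
  then show "\<forall>a\<in>(\<lambda>i. eta (Suc i) - eta i) ` {0..l}. a \<le> T" by blast
qed auto

lemma sum_split:
  fixes g :: "real \<Rightarrow> real"
  assumes "is_partition T l eta" "g integrable_on {0..T}"
  shows "integral {0..T} g = (\<Sum>i\<le>l. integral {eta i..eta (Suc i)} g)"
proof -
  have "j \<le> Suc l \<Longrightarrow> integral {0..eta j} g = (\<Sum>i<j. integral {eta i..eta (Suc i)} g)" for j
  proof (induction j)
    case 0 then show ?case using assms(1) unfolding is_partition_def by simp
  next
    case (Suc j)
    have b: "0 \<le> eta j" "eta j \<le> eta (Suc j)" "eta (Suc j) \<le> T"
      using part_bounds[OF assms(1)] part_mono[OF assms(1)] Suc by auto
    have "g integrable_on {0..eta (Suc j)}"
      by (rule integrable_subinterval_real[OF assms(2)]) (use b in auto)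
    then have "integral {0..eta j} g + integral {eta j..eta (Suc j)} g = integral {0..eta (Suc j)} g"
      using b by (intro HK_combine) auto
    then show ?case using Suc by simp
  qed
  from this[of "Suc l"] show ?thesis using assms(1) unfolding is_partition_def by (simp add: lessThan_Suc_atMost)
qed

lemma interp_el:
  fixes u U :: "real \<Rightarrow> real"
  assumes ab: "a < b" and uc: "continuous_on {a..b} u"
    and UI: "\<And>t. t \<in> {a..b} \<Longrightarrow> U t = U a + integral {a..t} u"
  shows "integral {a..b} (\<lambda>t. (U t - (U a + (U b - U a) / (b - a) * (t - a)))\<^sup>2)
         \<le> (b - a)\<^sup>2 / 6 * integral {a..b} (\<lambda>t. (u t)\<^sup>2)"
proof -
  define m where "m = (U b - U a) / (b - a)"
  define e where "e = (\<lambda>t. U t - (U a + m * (t - a)))"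
  define D where "D = integral {a..b} (\<lambda>t. (u t - m)\<^sup>2)"
  have umc: "continuous_on {a..b} (\<lambda>t. (u t - m))" using uc by (auto intro!: continuous_intros)
  have Ub: "integral {a..b} u = m * (b - a)" unfolding m_def using UI[of b] ab by simp
  have "D = integral {a..b} (\<lambda>t. 1 * (u t)\<^sup>2 + (- 2 * m) * u t + m\<^sup>2 * 1)"
    unfolding D_def by (rule integral_cong) (simp add: power2_eq_square algebra_simps)
  also have "\<dots> = integral {a..b} (\<lambda>t. (u t)\<^sup>2) - 2 * m * integral {a..b} u + m\<^sup>2 * (b - a)"
    by (subst int_lin3) (use uc ab in \<open>auto intro!: icont continuous_intros\<close>)
  finally have D1: "D = integral {a..b} (\<lambda>t. (u t)\<^sup>2) - m\<^sup>2 * (b - a)" using Ub by (simp add: power2_eq_square)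
  have D2: "D \<le> integral {a..b} (\<lambda>t. (u t)\<^sup>2)" using D1 ab by simp
  have D0: "D \<ge> 0" unfolding D_def by (rule HK_nonneg, rule icont) (use umc in \<open>auto intro!: continuous_intros\<close>)
  have pw: "(e t)\<^sup>2 \<le> D / (b - a) * ((t - a) * (b - t))" if t: "t \<in> {a..b}" for t
  proof -
    have sub1: "{a..t} \<subseteq> {a..b}" "{t..b} \<subseteq> {a..b}" using t by auto
    have comb: "integral {a..t} f + integral {t..b} f = integral {a..b} f" if "continuous_on {a..b} f" for f :: "real\<Rightarrow>real"
      by (rule HK_combine) (use t that in \<open>auto intro: icont\<close>)
    have e1: "e t = integral {a..t} (\<lambda>x. u x - m)"
    proof -
      have "integral {a..t} (\<lambda>x. u x - m) = integral {a..t} u - m * (t - a)"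
        by (subst integral_diff) (use t continuous_on_subset[OF uc sub1(1)] in \<open>auto intro: icont\<close>)
      then show ?thesis unfolding e_def using UI[OF t] by simp
    qed
    have e2: "e t = - integral {t..b} (\<lambda>x. u x - m)"
    proof -
      have "integral {t..b} (\<lambda>x. u x - m) = integral {t..b} u - m * (b - t)"
        by (subst integral_diff) (use t continuous_on_subset[OF uc sub1(2)] in \<open>auto intro: icont\<close>)
      moreover have "integral {a..t} u + integral {t..b} u = integral {a..b} u" by (rule comb[OF uc])
      ultimately show ?thesis unfolding e_def using UI[OF t] Ub ab by (simp add: algebra_simps)
    qed
    define A1 where "A1 = integral {a..t} (\<lambda>x. (u x - m)\<^sup>2)"
    define A2 where "A2 = integral {t..b} (\<lambda>x. (u x - m)\<^sup>2)"
    have A12: "A1 + A2 = D" unfolding A1_def A2_def D_def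
      by (rule comb) (use umc in \<open>auto intro!: continuous_intros\<close>)
    have c1: "(e t)\<^sup>2 \<le> (t - a) * A1" unfolding e1 A1_def
      by (rule cs_one) (use t continuous_on_subset[OF umc sub1(1)] in auto)
    have c2: "(e t)\<^sup>2 \<le> (b - t) * A2"
    proof -
      have "(e t)\<^sup>2 = (integral {t..b} (\<lambda>x. u x - m))\<^sup>2" unfolding e2 by simp
      also have "\<dots> \<le> (b - t) * A2" unfolding A2_def
        by (rule cs_one) (use t continuous_on_subset[OF umc sub1(2)] in auto)
      finally show ?thesis .
    qed
    have "(e t)\<^sup>2 * (b - a) = (e t)\<^sup>2 * (b - t) + (e t)\<^sup>2 * (t - a)" by (simp add: algebra_simps)
    also have "\<dots> \<le> ((t - a) * A1) * (b - t) + ((b - t) * A2) * (t - a)"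
      by (rule add_mono; rule mult_right_mono) (use c1 c2 t in auto)
    also have "\<dots> = (t - a) * (b - t) * D" unfolding A12[symmetric] by (simp add: algebra_simps)
    finally have "(e t)\<^sup>2 * (b - a) \<le> (t - a) * (b - t) * D" .
    then have "(e t)\<^sup>2 * (b - a) / (b - a) \<le> (t - a) * (b - t) * D / (b - a)"
      by (rule divide_right_mono) (use ab in simp)
    moreover have "(t - a) * (b - t) * D / (b - a) = D / (b - a) * ((t - a) * (b - t))" by simp
    ultimately show ?thesis using ab by simp
  qed
  have Uc: "continuous_on {a..b} U"
  proof -
    have "continuous_on {a..b} (\<lambda>t. U a + integral {a..t} u)"
      using indefinite_integral_continuous_1[OF icont[OF uc]] by (auto intro!: continuous_intros)
    then show ?thesis
      by (rule continuous_on_eq) (rule sym, erule UI)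
  qed
  have ec: "continuous_on {a..b} (\<lambda>t. (e t)\<^sup>2)" unfolding e_def using Uc by (intro continuous_intros)
  have pc: "continuous_on {a..b} (\<lambda>t. D / (b - a) * ((t - a) * (b - t)))" by (intro continuous_intros)
  have "integral {a..b} (\<lambda>t. (e t)\<^sup>2) \<le> integral {a..b} (\<lambda>t. D / (b - a) * ((t - a) * (b - t)))"
    by (rule integral_le[OF icont[OF ec] icont[OF pc] pw])
  also have "\<dots> = D / (b - a) * ((b - a)^3 / 6)" using int_prod_poly[of a b] ab by (simp only: integral_mult_right less_imp_le)
  also have "\<dots> = (b - a)\<^sup>2 / 6 * D" using ab by (simp add: power2_eq_square power3_eq_cube field_simps)
  also have "\<dots> \<le> (b - a)\<^sup>2 / 6 * integral {a..b} (\<lambda>t. (u t)\<^sup>2)" using D2 by (simp add: mult_left_mono)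
  finally show ?thesis unfolding e_def m_def .
qed

lemma frac_mono_k:
  fixes k m :: real
  assumes "0 \<le> k" "k \<le> m"
  shows "(1 - m) / (1 + m) \<le> (1 - k) / (1 + k)"
proof -
  have "(1 - m) * (1 + k) \<le> (1 - k) * (1 + m)" using assms by (simp add: algebra_simps)
  then show ?thesis using assms by (simp add: divide_simps)
qed

lemma poly1:
  fixes s :: real
  assumes "0 \<le> s" "s \<le> 3/2"
  shows "2 * (1 + 71/100 * s) * (173 + 50 * s\<^sup>2) \<le> (173 - 50 * s\<^sup>2) * (2 + s)\<^sup>2 * (1 + 405/1000 * s\<^sup>2)"
proof -
  have e: "(173 - 50 * s\<^sup>2) * (2 + s)\<^sup>2 * (1 + 405/1000 * s\<^sup>2) - 2 * (1 + 71/100 * s) * (173 + 50 * s\<^sup>2)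
     = 346 + 22317/50 * s + 7663/50 * s^2 + 463/50 * s^3 - 12187/200 * s^4 - 81 * s^5 - 81/4 * s^6"
    by (simp add: power2_eq_square power3_eq_cube power4_eq_xxxx algebra_simps eval_nat_numeral)
  have s2: "s^2 \<le> 3/2 * s" using mult_right_mono[OF assms(2) assms(1)] by (simp add: power2_eq_square)
  have q: "s^2 \<le> 9/4" using power_mono[OF assms(2), of 2] assms by (simp add: power2_eq_square)
  have s4: "s^4 \<le> 9/4 * s^2"
  proof -
    have "s^2 * s^2 \<le> 9/4 * s^2" by (rule mult_right_mono[OF q]) simp
    then show ?thesis by (simp add: power2_eq_square power4_eq_xxxx)
  qed
  have s5: "s^5 \<le> 3/2 * s^4"
  proof -
    have "s * s^4 \<le> 3/2 * s^4" by (rule mult_right_mono[OF assms(2)]) (use assms in simp)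
    then show ?thesis by (simp add: eval_nat_numeral)
  qed
  have s6: "s^6 \<le> 9/4 * s^4"
  proof -
    have "s^2 * s^4 \<le> 9/4 * s^4" by (rule mult_right_mono[OF q]) (use assms in simp)
    then show ?thesis by (simp add: eval_nat_numeral)
  qed
  have p: "0 \<le> s^3" "0 \<le> s^4" using assms by simp_all
  have "0 \<le> 346 + 22317/50 * s + 7663/50 * s^2 + 463/50 * s^3 - 12187/200 * s^4 - 81 * s^5 - 81/4 * s^6"
    using s2 s4 s5 s6 p assms by linarith
  then show ?thesis using e by linarith
qed

lemma poly2:
  fixes s :: real
  assumes "3/2 \<le> s"
  shows "2 * (1 + 71/100 * s) * (s + 4016/1000) \<le> (s - 16/1000) * (2 + s)\<^sup>2 * (1 + 405/1000 * s\<^sup>2)"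
proof -
  define x where "x = s - 3/2"
  have x: "x \<ge> 0" "s = x + 3/2" using assms by (auto simp: x_def)
  have e: "(s - 16/1000) * (2 + s)\<^sup>2 * (1 + 405/1000 * s\<^sup>2) - 2 * (1 + 71/100 * s) * (s + 4016/1000)
     = 9570827/800000 + 21356657/400000 * x + 4966271/100000 * x^2 + 213877/10000 * x^3 + 232551/50000 * x^4 + 81/200 * x^5"
    unfolding x(2) by (simp add: power2_eq_square power3_eq_cube power4_eq_xxxx eval_nat_numeral field_simps)
  have "0 \<le> 9570827/800000 + 21356657/400000 * x + 4966271/100000 * x^2 + 213877/10000 * x^3 + 232551/50000 * x^4 + 81/200 * x^5"
    using x by simp
  then show ?thesis using e by linarith
qed

lemma fle:
  fixes a b c d :: real
  assumes "0 < b" "0 < d" "a * d \<le> c * b"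
  shows "a / b \<le> c / d"
  using assms by (simp add: field_simps)

lemma feq:
  fixes a b c d :: real
  assumes "b \<noteq> 0" "d \<noteq> 0" "a * d = c * b"
  shows "a / b = c / d"
  using assms by (simp add: field_simps)

lemma numeric:
  fixes s k :: real
  assumes s: "s > 0" and k0: "0 \<le> k" and k1: "k * sqrt 12 \<le> s\<^sup>2" and k2: "k * sqrt 24 * (2 + s) \<le> pi\<^sup>2"
  shows "2 * pi\<^sup>2 / ((2 + s)\<^sup>2 * (pi\<^sup>2 + 4 * s\<^sup>2)) * (1 + s / sqrt 2) \<le> (1 - k) / (1 + k)"
proof -
  define P where "P = pi\<^sup>2"
  have P0: "P > 0" unfolding P_def by simp
  have Pu: "P \<le> 98697/10000"
  proof -
    have "pi \<le> 3.1415926535899" by (rule pi_approx(2))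
    then have "pi\<^sup>2 \<le> 3.1415926535899\<^sup>2" by (rule power_mono) simp
    moreover have "(3.1415926535899::real)\<^sup>2 \<le> 98697/10000" by (simp add: power2_eq_square)
    ultimately show ?thesis unfolding P_def by linarith
  qed
  have r2: "100/71 \<le> sqrt 2" by (rule real_le_rsqrt) (simp add: power2_eq_square)
  have A: "1 + s / sqrt 2 \<le> 1 + 71/100 * s"
  proof -
    have "s / sqrt 2 \<le> s / (100/71)" by (rule divide_left_mono) (use r2 s in auto)
    then show ?thesis by simp
  qed
  define D where "D = (2 + s)\<^sup>2"
  have D0: "D > 0" unfolding D_def using s by simp
  define G where "G = 2 * (1 + 71/100 * s) / (D * (1 + 405/1000 * s\<^sup>2))"
  have step1: "2 * P / (D * (P + 4 * s\<^sup>2)) \<le> 2 / (D * (1 + 405/1000 * s\<^sup>2))"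
  proof (rule fle)
    show "0 < D * (P + 4 * s\<^sup>2)" using D0 P0 by (simp add: add_pos_nonneg)
    show "0 < D * (1 + 405/1000 * s\<^sup>2)" using D0 by (simp add: add_pos_nonneg)
    have "P * (405/1000 * s\<^sup>2) \<le> 4 * s\<^sup>2"
    proof -
      have h: "P * s\<^sup>2 \<le> 98697/10000 * s\<^sup>2" by (rule mult_right_mono[OF Pu]) simp
      have "P * (405/1000 * s\<^sup>2) = 405/1000 * (P * s\<^sup>2)" by simp
      moreover have "s\<^sup>2 \<ge> 0" by simp
      ultimately show ?thesis using h by linarith
    qed
    then show "2 * P * (D * (1 + 405/1000 * s\<^sup>2)) \<le> 2 * (D * (P + 4 * s\<^sup>2))"
      using D0 by (simp add: algebra_simps)
  qed
  have LG: "2 * P / (D * (P + 4 * s\<^sup>2)) * (1 + s / sqrt 2) \<le> G"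
  proof -
    have "2 * P / (D * (P + 4 * s\<^sup>2)) * (1 + s / sqrt 2) \<le> 2 / (D * (1 + 405/1000 * s\<^sup>2)) * (1 + 71/100 * s)"
      by (rule mult_mono[OF step1 A]) (use D0 P0 s in \<open>auto intro!: divide_nonneg_pos add_pos_nonneg\<close>)
    then show ?thesis unfolding G_def by simp
  qed
  have GK: "G \<le> (1 - k) / (1 + k)"
  proof (cases "s \<le> 3/2")
    case True
    have r12: "346/100 \<le> sqrt 12" by (rule real_le_rsqrt) (simp add: power2_eq_square)
    define m where "m = 50 * s\<^sup>2 / 173"
    have km: "k \<le> m"
    proof -
      have "k * (346/100) \<le> k * sqrt 12" by (rule mult_left_mono[OF r12 k0])
      then show ?thesis using k1 unfolding m_def by simp
    qed
    have "G \<le> (1 - m) / (1 + m)"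
    proof -
      have m0: "m \<ge> 0" unfolding m_def by simp
      have "(1 - m) / (1 + m) = (173 - 50 * s\<^sup>2) / (173 + 50 * s\<^sup>2)"
      proof (rule feq)
        show "1 + m \<noteq> 0" using m0 by simp
        have "0 \<le> s\<^sup>2" by simp
        then show "173 + 50 * s\<^sup>2 \<noteq> 0" by linarith
        have hm: "173 * m = 50 * s\<^sup>2" unfolding m_def by simp
        have "(1 - m) * (173 + 50 * s\<^sup>2) - (173 - 50 * s\<^sup>2) * (1 + m) = 2 * (50 * s\<^sup>2 - 173 * m)"
          by (simp add: algebra_simps)
        then have "(1 - m) * (173 + 50 * s\<^sup>2) - (173 - 50 * s\<^sup>2) * (1 + m) = 0" unfolding hm by simp
        then show "(1 - m) * (173 + 50 * s\<^sup>2) = (173 - 50 * s\<^sup>2) * (1 + m)" by (simp only: right_minus_eq)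
      qed
      moreover have "G \<le> (173 - 50 * s\<^sup>2) / (173 + 50 * s\<^sup>2)" unfolding G_def
      proof (rule fle)
        show "0 < D * (1 + 405/1000 * s\<^sup>2)" using D0 by (simp add: add_pos_nonneg)
        have "0 \<le> s\<^sup>2" by simp
        then show "0 < 173 + 50 * s\<^sup>2" by linarith
        show "2 * (1 + 71/100 * s) * (173 + 50 * s\<^sup>2) \<le> (173 - 50 * s\<^sup>2) * (D * (1 + 405/1000 * s\<^sup>2))"
          using poly1[of s] True s unfolding D_def by (simp add: mult.assoc)
      qed
      ultimately show ?thesis by simp
    qed
    also have "\<dots> \<le> (1 - k) / (1 + k)" by (rule frac_mono_k[OF k0 km])
    finally show ?thesis .
  next
    case False
    have r24: "4898/1000 \<le> sqrt 24" by (rule real_le_rsqrt) (simp add: power2_eq_square)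
    define m where "m = (2016/1000) / (2 + s)"
    have km: "k \<le> m"
    proof -
      have "k * (4898/1000) * (2 + s) \<le> k * sqrt 24 * (2 + s)"
        using mult_left_mono[OF r24 k0] s by (intro mult_right_mono) auto
      then have "k * (4898/1000) * (2 + s) \<le> 98697/10000" using k2 Pu unfolding P_def by linarith
      then have "k * (2 + s) \<le> 2016/1000" by simp
      then show ?thesis unfolding m_def using s by (simp add: field_simps)
    qed
    have "G \<le> (1 - m) / (1 + m)"
    proof -
      have m0: "m \<ge> 0" unfolding m_def using s by simp
      have "(1 - m) / (1 + m) = (s - 16/1000) / (s + 4016/1000)"
      proof (rule feq)
        show "1 + m \<noteq> 0" using m0 by simp
        show "s + 4016/1000 \<noteq> 0" using s by simp
        have pos: "2 + s \<noteq> 0" using s by linarith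
        have g: "(2 + s) * (C / (2 + s)) = C" for C :: real using pos by simp
        have hm: "(2 + s) * m = 2016/1000" unfolding m_def by (rule g)
        have "(1 - m) * (s + 4016/1000) - (s - 16/1000) * (1 + m) = 2 * (2016/1000 - (2 + s) * m)"
          by (simp add: field_simps)
        then have "(1 - m) * (s + 4016/1000) - (s - 16/1000) * (1 + m) = 0" unfolding hm by simp
        then show "(1 - m) * (s + 4016/1000) = (s - 16/1000) * (1 + m)" by (simp only: right_minus_eq)
      qed
      moreover have "G \<le> (s - 16/1000) / (s + 4016/1000)" unfolding G_def
      proof (rule fle)
        show "0 < D * (1 + 405/1000 * s\<^sup>2)" using D0 by (simp add: add_pos_nonneg)
        show "0 < s + 4016/1000" using s by simp
        show "2 * (1 + 71/100 * s) * (s + 4016/1000) \<le> (s - 16/1000) * (D * (1 + 405/1000 * s\<^sup>2))"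
          using poly2[of s] False unfolding D_def by (simp add: mult.assoc)
      qed
      ultimately show ?thesis by simp
    qed
    also have "\<dots> \<le> (1 - k) / (1 + k)" by (rule frac_mono_k[OF k0 km])
    finally show ?thesis .
  qed
  show ?thesis using LG GK unfolding P_def D_def by simp
qed

lemma deriv_eq_int:
  assumes "\<And>t. t \<in> {0..T} \<Longrightarrow> (w has_real_derivative r t) (at t within {0..T})" "x \<in> {0..T} - {0, T}"
  shows "deriv w x = r x"
proof -
  have x: "0 < x" "x < T" "x \<in> {0..T}" using assms(2) by auto
  show ?thesis by (rule DERIV_imp_deriv, rule deriv_interior[OF assms(1)[OF x(3)] x(1,2)])
qed

lemma H1semi_eq:
  assumes "\<And>t. t \<in> {0..T} \<Longrightarrow> (w has_real_derivative r t) (at t within {0..T})"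
  shows "H1semi T w = sqrt (integral {0..T} (\<lambda>t. (r t)\<^sup>2))"
proof -
  have "integral {0..T} (\<lambda>t. (deriv w t)\<^sup>2) = integral {0..T} (\<lambda>t. (r t)\<^sup>2)"
  proof (rule integral_spike[of "{0, T}"])
    fix x assume x: "x \<in> {0..T} - {0, T}"
    show "(r x)\<^sup>2 = (deriv w x)\<^sup>2" using deriv_eq_int[OF assms x] by simp
  qed auto
  then show ?thesis unfolding H1semi_def by simp
qed

lemma bilin_eq:
  fixes u p w r :: "real \<Rightarrow> real"
  assumes T: "0 \<le> T"
    and du: "\<And>t. t \<in> {0..T} \<Longrightarrow> (u has_real_derivative p t) (at t within {0..T})"
    and pc: "continuous_on {0..T} p"
    and dw: "\<And>t. t \<in> {0..T} \<Longrightarrow> (w has_real_derivative r t) (at t within {0..T})"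
    and rc: "continuous_on {0..T} r"
  shows "bilin_a T \<mu> u (HT T w) = integral {0..T} (\<lambda>t. (p t + \<mu> * integral {0..t} u) * r t)"
proof -
  define U where "U = (\<lambda>t. integral {0..t} u)"
  have uc: "continuous_on {0..T} u" by (rule DERIV_continuous_on[OF du])
  have wc: "continuous_on {0..T} w" by (rule DERIV_continuous_on[OF dw])
  have dU: "(U has_real_derivative u x) (at x within {0..T})" if "x \<in> {0..T}" for x
    unfolding U_def by (rule integral_has_real_derivative[OF uc that])
  have Uc: "continuous_on {0..T} U" by (rule DERIV_continuous_on[OF dU])
  have dH: "(HT T w has_real_derivative - r t) (at t within {0..T})" if "t \<in> {0..T}" for t
    unfolding HT_def by (auto intro!: derivative_eq_intros dw that)
  have I1: "integral {0..T} (\<lambda>t. deriv u t * deriv (HT T w) t) = integral {0..T} (\<lambda>t. - (p t * r t))"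
  proof (rule integral_spike[of "{0, T}"])
    fix x assume x: "x \<in> {0..T} - {0, T}"
    show "- (p x * r x) = deriv u x * deriv (HT T w) x" using deriv_eq_int[OF du x] deriv_eq_int[OF dH x] by simp
  qed auto
  have "integral {0..T} (\<lambda>t. u t * (w T - w t) + U t * (- r t)) = (\<lambda>t. U t * (w T - w t)) T - (\<lambda>t. U t * (w T - w t)) 0"
    by (rule ftc_real[OF T]) (auto intro!: derivative_eq_intros dU dw simp: algebra_simps)
  also have "\<dots> = 0" by (simp add: U_def)
  finally have z: "integral {0..T} (\<lambda>t. u t * (w T - w t) + U t * (- r t)) = 0" .
  have "integral {0..T} (\<lambda>t. u t * (w T - w t) + U t * (- r t)) = integral {0..T} (\<lambda>t. u t * (w T - w t)) + integral {0..T} (\<lambda>t. U t * (- r t))"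
    by (rule integral_add) (use uc wc Uc rc in \<open>auto intro!: icont continuous_intros\<close>)
  also have "integral {0..T} (\<lambda>t. U t * (- r t)) = - integral {0..T} (\<lambda>t. U t * r t)" by simp
  finally have I2: "integral {0..T} (\<lambda>t. u t * HT T w t) = integral {0..T} (\<lambda>t. U t * r t)"
    using z unfolding HT_def by simp
  have "integral {0..T} (\<lambda>t. (p t + \<mu> * U t) * r t) = integral {0..T} (\<lambda>t. p t * r t + \<mu> * (U t * r t))"
    by (simp add: algebra_simps)
  also have "\<dots> = integral {0..T} (\<lambda>t. p t * r t) + \<mu> * integral {0..T} (\<lambda>t. U t * r t)"
    by (subst integral_add) (use pc Uc rc in \<open>auto intro!: icont continuous_intros\<close>)
  finally show ?thesis unfolding bilin_a_def I1 I2 U_def by simp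
qed

locale msetup =
  fixes T \<mu> :: real and l :: nat and eta :: "nat \<Rightarrow> real" and u p :: "real \<Rightarrow> real"
  assumes T: "T > 0" and mu: "\<mu> > 0" and part: "is_partition T l eta"
    and du: "\<And>t. t \<in> {0..T} \<Longrightarrow> (u has_real_derivative p t) (at t within {0..T})"
    and pc: "continuous_on {0..T} p" and u0: "u 0 = 0"
    and upoly: "\<forall>i\<le>l. \<exists>c0 c1 c2. \<forall>t\<in>{eta i..eta (Suc i)}. u t = c0 + c1 * t + c2 * t ^ 2"
begin

definition "U = (\<lambda>t. integral {0..t} u)"
definition "f = (\<lambda>t. p t + \<mu> * U t)"
definition "slope = (\<lambda>i. (U (eta (Suc i)) - U (eta i)) / (eta (Suc i) - eta i))"
definition "dd = (\<lambda>i. slope i - (if i = 0 then 0 else slope (i - 1)))"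
definition "IU = (\<lambda>t. \<Sum>i\<le>l. dd i * max 0 (t - eta i))"
definition "W = (\<lambda>t. integral {0..t} IU)"
definition "v = (\<lambda>t. u t + \<mu> * W t)"
definition "q = (\<lambda>t. p t + \<mu> * IU t)"
definition "e = (\<lambda>t. U t - IU t)"

lemma uc: "continuous_on {0..T} u" by (rule DERIV_continuous_on[OF du])

lemma dU: "x \<in> {0..T} \<Longrightarrow> (U has_real_derivative u x) (at x within {0..T})"
  unfolding U_def by (rule integral_has_real_derivative[OF uc])

lemma Uc: "continuous_on {0..T} U" by (rule DERIV_continuous_on[OF dU])

lemma fc: "continuous_on {0..T} f" unfolding f_def using Uc pc by (auto intro!: continuous_intros)

lemma IUc: "continuous_on S IU" unfolding IU_def by (auto intro!: continuous_intros)

lemma U_split: "a \<le> t \<Longrightarrow> 0 \<le> a \<Longrightarrow> t \<le> T \<Longrightarrow> U t = U a + integral {a..t} u"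
proof -
  assume "a \<le> t" "0 \<le> a" "t \<le> T"
  have "integral {0..a} u + integral {a..t} u = integral {0..t} u"
    by (rule HK_combine) (use \<open>a \<le> t\<close> \<open>0 \<le> a\<close> \<open>t \<le> T\<close> in \<open>auto intro!: icont continuous_on_subset[OF uc]\<close>)
  then show ?thesis unfolding U_def by simp
qed

lemma sum_lin: "j \<le> l \<Longrightarrow> (\<Sum>i\<le>j. dd i * (t - eta i)) = U (eta j) + slope j * (t - eta j)"
proof (induction j)
  case 0
  have "eta 0 = 0" using part unfolding is_partition_def by simp
  then show ?case by (simp add: dd_def U_def)
next
  case (Suc j)
  have lt: "eta (Suc j) - eta j > 0" using part_lt[OF part, of j] Suc by simp
  have "U (eta (Suc j)) = U (eta j) + slope j * (eta (Suc j) - eta j)"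
    unfolding slope_def using lt by simp
  then show ?case using Suc by (simp add: dd_def algebra_simps)
qed

lemma IU_local:
  assumes j: "j \<le> l" and t: "t \<in> {eta j..eta (Suc j)}"
  shows "IU t = U (eta j) + slope j * (t - eta j)"
proof -
  have "IU t = (\<Sum>i\<le>l. if i \<le> j then dd i * (t - eta i) else 0)"
    unfolding IU_def
  proof (rule sum.cong[OF refl])
    fix i assume i: "i \<in> {..l}"
    show "dd i * max 0 (t - eta i) = (if i \<le> j then dd i * (t - eta i) else 0)"
    proof (cases "i \<le> j")
      case True
      then have "eta i \<le> eta j" using part_mono[OF part, of i j] j by simp
      then show ?thesis using True t by simp
    next
      case False
      then have "eta (Suc j) \<le> eta i" using part_mono[OF part, of "Suc j" i] i by simp
      then show ?thesis using False t by simp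
    qed
  qed
  also have "\<dots> = (\<Sum>i\<in>{..j}. dd i * (t - eta i))"
  proof -
    have "{..l} \<inter> {i. i \<le> j} = {..j}" using j by auto
    then show ?thesis by (simp add: sum.If_cases)
  qed
  also have "\<dots> = U (eta j) + slope j * (t - eta j)" by (rule sum_lin[OF j])
  finally show ?thesis .
qed


lemma dW: "t \<in> {0..T} \<Longrightarrow> (W has_real_derivative IU t) (at t within {0..T})"
  unfolding W_def by (rule integral_has_real_derivative[OF IUc])

lemma dv: "t \<in> {0..T} \<Longrightarrow> (v has_real_derivative q t) (at t within {0..T})"
  unfolding v_def q_def by (auto intro!: derivative_eq_intros du dW)

lemma qc: "continuous_on {0..T} q" unfolding q_def using pc IUc by (auto intro!: continuous_intros)

lemma W_local:
  assumes j: "j \<le> l" and t: "t \<in> {eta j..eta (Suc j)}"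
  shows "W t = W (eta j) + U (eta j) * (t - eta j) + slope j * (t - eta j)\<^sup>2 / 2"
proof -
  have b: "0 \<le> eta j" "eta (Suc j) \<le> T" using part_bounds[OF part, of j] part_bounds[OF part, of "Suc j"] j by auto
  have "integral {0..eta j} IU + integral {eta j..t} IU = integral {0..t} IU"
    by (rule HK_combine) (use b t in \<open>auto intro!: icont IUc\<close>)
  then have "W t = W (eta j) + integral {eta j..t} IU" unfolding W_def by simp
  also have "integral {eta j..t} IU = integral {eta j..t} (\<lambda>x. U (eta j) + slope j * (x - eta j))"
    by (rule integral_cong, rule IU_local[OF j]) (use t in auto)
  also have "\<dots> = (\<lambda>x. U (eta j) * (x - eta j) + slope j * (x - eta j)\<^sup>2 / 2) t - (\<lambda>x. U (eta j) * (x - eta j) + slope j * (x - eta j)\<^sup>2 / 2) (eta j)"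
    by (rule ftc_real) (use t in \<open>auto intro!: derivative_eq_intros simp: power2_eq_square field_simps\<close>)
  finally show ?thesis by simp
qed

lemma v_poly: "\<forall>i\<le>l. \<exists>c0 c1 c2. \<forall>t\<in>{eta i..eta (Suc i)}. v t = c0 + c1 * t + c2 * t ^ 2"
proof (intro allI impI)
  fix i assume i: "i \<le> l"
  obtain c0 c1 c2 where c: "\<forall>t\<in>{eta i..eta (Suc i)}. u t = c0 + c1 * t + c2 * t ^ 2" using upoly i by blast
  define A where "A = W (eta i)"
  define B where "B = U (eta i)"
  define S where "S = slope i"
  define a where "a = eta i"
  show "\<exists>c0 c1 c2. \<forall>t\<in>{eta i..eta (Suc i)}. v t = c0 + c1 * t + c2 * t ^ 2"
  proof (intro exI ballI)
    fix t assume t: "t \<in> {eta i..eta (Suc i)}"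
    have "v t = c0 + c1 * t + c2 * t ^ 2 + \<mu> * (A + B * (t - a) + S * (t - a)\<^sup>2 / 2)"
      unfolding v_def using c t W_local[OF i t] by (simp add: A_def B_def S_def a_def)
    also have "\<dots> = (c0 + \<mu> * (A - B * a + S * a\<^sup>2 / 2)) + (c1 + \<mu> * (B - S * a)) * t + (c2 + \<mu> * S / 2) * t ^ 2"
      by (simp add: power2_eq_square algebra_simps add_divide_distrib diff_divide_distrib)
    finally show "v t = (c0 + \<mu> * (A - B * a + S * a\<^sup>2 / 2)) + (c1 + \<mu> * (B - S * a)) * t + (c2 + \<mu> * S / 2) * t ^ 2" .
  qed
qed

lemma v_in: "v \<in> Vh0 T l eta"
proof -
  have "C1_on T v" unfolding C1_on_def using dv qc by blast
  moreover have "v 0 = 0" unfolding v_def W_def using u0 by simp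
  ultimately show ?thesis unfolding Vh0_def S2h_def using v_poly by blast
qed


lemma a_v: "bilin_a T \<mu> u (HT T v) = integral {0..T} (\<lambda>t. f t * q t)"
  unfolding f_def U_def by (rule bilin_eq[OF _ du pc dv qc]) (use T in simp)

lemma H1_v: "H1semi T v = sqrt (integral {0..T} (\<lambda>t. (q t)\<^sup>2))" by (rule H1semi_eq[OF dv])
lemma H1_u: "H1semi T u = sqrt (integral {0..T} (\<lambda>t. (p t)\<^sup>2))" by (rule H1semi_eq[OF du])


definition "X2 = integral {0..T} (\<lambda>t. (f t)\<^sup>2)"

lemma X2_nonneg: "X2 \<ge> 0" unfolding X2_def by (rule HK_nonneg, rule icont) (use fc in \<open>auto intro!: continuous_intros\<close>)

lemma E1: "t \<in> {0..T} \<Longrightarrow> (u t)\<^sup>2 + \<mu> * (U t)\<^sup>2 \<le> t * X2"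
  unfolding X2_def f_def U_def by (rule energy[OF _ mu pc du u0]) (use T in auto)

lemma E2: "integral {0..T} (\<lambda>t. (u t)\<^sup>2) \<le> T\<^sup>2 / 2 * X2"
proof -
  have "integral {0..T} (\<lambda>t. (u t)\<^sup>2) \<le> integral {0..T} (\<lambda>t. X2 * t)"
  proof (rule integral_le)
    show "(\<lambda>t. (u t)\<^sup>2) integrable_on {0..T}" using uc by (auto intro!: icont continuous_intros)
    show "(\<lambda>t. X2 * t) integrable_on {0..T}" by (auto intro!: icont continuous_intros)
    fix t assume t: "t \<in> {0..T}"
    have "0 \<le> \<mu> * (U t)\<^sup>2" using mu by simp
    moreover have "t * X2 = X2 * t" by simp
    ultimately show "(u t)\<^sup>2 \<le> X2 * t" using E1[OF t] by linarith
  qed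
  also have "\<dots> = X2 * (T\<^sup>2 / 2)" using int_id[of T] T by simp
  finally show ?thesis by (simp add: mult.commute)
qed

lemma E3: "\<mu> * integral {0..T} (\<lambda>t. (U t)\<^sup>2) \<le> T\<^sup>2 / 2 * X2"
proof -
  have "integral {0..T} (\<lambda>t. \<mu> * (U t)\<^sup>2) \<le> integral {0..T} (\<lambda>t. X2 * t)"
  proof (rule integral_le)
    show "(\<lambda>t. \<mu> * (U t)\<^sup>2) integrable_on {0..T}" using Uc by (auto intro!: icont continuous_intros)
    show "(\<lambda>t. X2 * t) integrable_on {0..T}" by (auto intro!: icont continuous_intros)
    fix t assume t: "t \<in> {0..T}"
    have "(u t)\<^sup>2 \<ge> 0" by simp
    moreover have "t * X2 = X2 * t" by simp
    ultimately show "\<mu> * (U t)\<^sup>2 \<le> X2 * t" using E1[OF t] by linarith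
  qed
  also have "\<dots> = X2 * (T\<^sup>2 / 2)" using int_id[of T] T by simp
  finally show ?thesis by (simp add: mult.commute)
qed

lemma ec: "continuous_on {0..T} e" unfolding e_def using Uc IUc by (auto intro!: continuous_intros)

lemma I_e: "integral {0..T} (\<lambda>t. (e t)\<^sup>2) \<le> (mesh l eta)\<^sup>2 / 6 * integral {0..T} (\<lambda>t. (u t)\<^sup>2)"
proof -
  define h where "h = mesh l eta"
  have "integral {0..T} (\<lambda>t. (e t)\<^sup>2) = (\<Sum>i\<le>l. integral {eta i..eta (Suc i)} (\<lambda>t. (e t)\<^sup>2))"
    by (rule sum_split[OF part]) (use ec in \<open>auto intro!: icont continuous_intros\<close>)
  also have "\<dots> \<le> (\<Sum>i\<le>l. h\<^sup>2 / 6 * integral {eta i..eta (Suc i)} (\<lambda>t. (u t)\<^sup>2))"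
  proof (rule sum_mono)
    fix i assume i: "i \<in> {..l}"
    define a where "a = eta i"
    define b where "b = eta (Suc i)"
    have ab: "a < b" "0 \<le> a" "b \<le> T" using part_lt[OF part, of i] part_bounds[OF part, of i] part_bounds[OF part, of "Suc i"] i
      by (auto simp: a_def b_def)
    have "integral {a..b} (\<lambda>t. (e t)\<^sup>2) = integral {a..b} (\<lambda>t. (U t - (U a + (U b - U a) / (b - a) * (t - a)))\<^sup>2)"
      by (rule integral_cong) (use IU_local[of i] i in \<open>auto simp: e_def a_def b_def slope_def\<close>)
    also have "\<dots> \<le> (b - a)\<^sup>2 / 6 * integral {a..b} (\<lambda>t. (u t)\<^sup>2)"
      by (rule interp_el[OF ab(1)]) (use ab continuous_on_subset[OF uc] U_split in auto)
    also have "\<dots> \<le> h\<^sup>2 / 6 * integral {a..b} (\<lambda>t. (u t)\<^sup>2)"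
    proof (rule mult_right_mono)
      have "b - a \<le> h" unfolding h_def a_def b_def using mesh_ge[of i l eta] i by simp
      then have "(b - a)\<^sup>2 \<le> h\<^sup>2" using ab by (intro power_mono) auto
      then show "(b - a)\<^sup>2 / 6 \<le> h\<^sup>2 / 6" by simp
      show "0 \<le> integral {a..b} (\<lambda>t. (u t)\<^sup>2)"
        by (rule HK_nonneg, rule icont) (use ab continuous_on_subset[OF uc] in \<open>auto intro!: continuous_intros\<close>)
    qed
    finally show "integral {eta i..eta (Suc i)} (\<lambda>t. (e t)\<^sup>2) \<le> h\<^sup>2 / 6 * integral {eta i..eta (Suc i)} (\<lambda>t. (u t)\<^sup>2)"
      by (simp add: a_def b_def)
  qed
  also have "\<dots> = h\<^sup>2 / 6 * (\<Sum>i\<le>l. integral {eta i..eta (Suc i)} (\<lambda>t. (u t)\<^sup>2))" by (simp add: sum_distrib_left)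
  also have "(\<Sum>i\<le>l. integral {eta i..eta (Suc i)} (\<lambda>t. (u t)\<^sup>2)) = integral {0..T} (\<lambda>t. (u t)\<^sup>2)"
    by (rule sum_split[OF part, symmetric]) (use uc in \<open>auto intro!: icont continuous_intros\<close>)
  finally show ?thesis unfolding h_def .
qed

end

lemma sq_le_sqrt:
  fixes a b :: real
  assumes "a\<^sup>2 \<le> b"
  shows "\<bar>a\<bar> \<le> sqrt b"
  using assms real_le_rsqrt[of "\<bar>a\<bar>" b] by simp

lemma sqrt_le_of_sq:
  fixes a b :: real
  assumes "0 \<le> b" "a \<le> b\<^sup>2"
  shows "sqrt a \<le> b"
proof -
  have "sqrt a \<le> sqrt (b\<^sup>2)" by (rule real_sqrt_le_mono[OF assms(2)])
  also have "sqrt (b\<^sup>2) = b" using assms(1) by simp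
  finally show ?thesis .
qed

lemma final_alg:
  fixes X2 Ie IU2 Ife IfU \<mu> T h Ip2 Iq2 :: real
  assumes X20: "X2 \<ge> 0" and Ie0: "Ie \<ge> 0" and IU0: "IU2 \<ge> 0" and mu: "\<mu> > 0" and T: "T > 0" and h0: "h \<ge> 0"
    and cs1: "Ife\<^sup>2 \<le> X2 * Ie" and cs2: "IfU\<^sup>2 \<le> X2 * IU2"
    and ie: "Ie \<le> h\<^sup>2 / 6 * (T\<^sup>2 / 2 * X2)"
    and iu: "\<mu> * IU2 \<le> T\<^sup>2 / 2 * X2"
    and hT: "h \<le> T" and hm: "h \<le> pi\<^sup>2 / (sqrt 2 * (2 + sqrt \<mu> * T) * \<mu> * T)"
    and Ip: "Ip2 = X2 - 2 * \<mu> * IfU + \<mu>\<^sup>2 * IU2" and Ip0: "Ip2 > 0"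
    and Iq: "Iq2 = X2 - 2 * \<mu> * Ife + \<mu>\<^sup>2 * Ie"
  shows "Iq2 > 0 \<and> 2 * pi\<^sup>2 / ((2 + sqrt \<mu> * T)\<^sup>2 * (pi\<^sup>2 + 4 * \<mu> * T\<^sup>2)) * sqrt Ip2 \<le> (X2 - \<mu> * Ife) / sqrt Iq2"
proof -
  define X where "X = sqrt X2"
  define \<epsilon> where "\<epsilon> = sqrt Ie"
  define Y where "Y = sqrt IU2"
  define s where "s = sqrt \<mu> * T"
  define N where "N = sqrt Ip2"
  have X0: "X \<ge> 0" "X\<^sup>2 = X2" unfolding X_def using X20 by auto
  have e0: "\<epsilon> \<ge> 0" "\<epsilon>\<^sup>2 = Ie" unfolding \<epsilon>_def using Ie0 by auto
  have Y0: "Y \<ge> 0" "Y\<^sup>2 = IU2" unfolding Y_def using IU0 by auto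
  have s0: "s > 0" "s\<^sup>2 = \<mu> * T\<^sup>2" unfolding s_def using mu T by (auto simp: power_mult_distrib)
  have N0: "N > 0" "N\<^sup>2 = Ip2" unfolding N_def using Ip0 by auto
  have fe: "\<bar>Ife\<bar> \<le> X * \<epsilon>"
    using sq_le_sqrt[OF cs1] X20 Ie0 unfolding X_def \<epsilon>_def by (simp add: real_sqrt_mult)
  have fU: "\<bar>IfU\<bar> \<le> X * Y"
    using sq_le_sqrt[OF cs2] X20 IU0 unfolding X_def Y_def by (simp add: real_sqrt_mult)
  have "Ip2 \<le> (X + \<mu> * Y)\<^sup>2"
  proof -
    have "- IfU \<le> X * Y" using fU by linarith
    then have a: "(2 * \<mu>) * (- IfU) \<le> (2 * \<mu>) * (X * Y)" by (rule mult_left_mono) (use mu in simp)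
    have b: "(X + \<mu> * Y)\<^sup>2 = X\<^sup>2 + (2 * \<mu>) * (X * Y) + \<mu>\<^sup>2 * Y\<^sup>2" by (simp add: power2_eq_square algebra_simps)
    have c: "(2 * \<mu>) * (- IfU) = - 2 * \<mu> * IfU" by simp
    show ?thesis unfolding Ip b X0(2) Y0(2) using a c by linarith
  qed
  then have N1: "N \<le> X + \<mu> * Y" unfolding N_def
    by (rule sqrt_le_of_sq[rotated]) (use X0 Y0 mu in simp)
  have "(\<mu> * Y)\<^sup>2 \<le> (s * X / sqrt 2)\<^sup>2"
  proof -
    have "(\<mu> * Y)\<^sup>2 = \<mu> * (\<mu> * IU2)" using Y0 by (simp add: power2_eq_square)
    also have "\<dots> \<le> \<mu> * (T\<^sup>2 / 2 * X2)" using iu mu by simp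
    also have "\<dots> = (s * X / sqrt 2)\<^sup>2" using s0 X0 by (simp add: power_mult_distrib power_divide)
    finally show ?thesis .
  qed
  then have muY: "\<mu> * Y \<le> s * X / sqrt 2"
    using power2_le_imp_le[of "\<mu> * Y" "s * X / sqrt 2"] s0 X0 by simp
  have NX: "N \<le> X * (1 + s / sqrt 2)" using N1 muY by (simp add: algebra_simps)
  have Xpos: "X > 0"
  proof (rule ccontr)
    assume "\<not> X > 0"
    then have "X = 0" using X0 by simp
    then show False using NX N0 by simp
  qed
  define k where "k = \<mu> * h * T / sqrt 12"
  have k0: "k \<ge> 0" unfolding k_def using mu h0 T by simp
  have k1: "k * sqrt 12 \<le> s\<^sup>2"
  proof -
    have "k * sqrt 12 = \<mu> * h * T" unfolding k_def by simp
    also have "\<dots> \<le> \<mu> * T * T" using hT mu T by simp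
    finally show ?thesis using s0 by (simp add: power2_eq_square mult.assoc)
  qed
  have k2: "k * sqrt 24 * (2 + s) \<le> pi\<^sup>2"
  proof -
    have "sqrt 24 = sqrt 12 * sqrt 2" by (simp flip: real_sqrt_mult)
    then have "k * sqrt 24 * (2 + s) = h * (sqrt 2 * (2 + s) * \<mu> * T)" unfolding k_def by simp
    also have "\<dots> \<le> pi\<^sup>2 / (sqrt 2 * (2 + s) * \<mu> * T) * (sqrt 2 * (2 + s) * \<mu> * T)"
      by (rule mult_right_mono) (use hm s0 mu T in \<open>auto simp: s_def\<close>)
    also have "\<dots> = pi\<^sup>2" using s0 mu T by simp
    finally show ?thesis .
  qed
  define c where "c = 2 * pi\<^sup>2 / ((2 + s)\<^sup>2 * (pi\<^sup>2 + 4 * s\<^sup>2))"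
  have c0: "c > 0"
  proof -
    have "(2 + s)\<^sup>2 > 0" using s0 by simp
    moreover have "pi\<^sup>2 + 4 * s\<^sup>2 > 0" by (simp add: add_pos_nonneg)
    ultimately show ?thesis unfolding c_def by (simp add: divide_pos_pos)
  qed
  have num: "c * (1 + s / sqrt 2) \<le> (1 - k) / (1 + k)" unfolding c_def by (rule numeric[OF s0(1) k0 k1 k2])
  have k_lt: "k < 1"
  proof -
    have "0 < 1 + s / sqrt 2" using s0 by (simp add: add_pos_nonneg)
    then have "0 < c * (1 + s / sqrt 2)" using c0 by simp
    then have "0 < (1 - k) / (1 + k)" using num by linarith
    then show ?thesis using k0 by (simp add: zero_less_divide_iff)
  qed
  define y where "y = \<mu> * \<epsilon>"
  have y0: "y \<ge> 0" unfolding y_def using mu e0 by simp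
  have "y\<^sup>2 \<le> (k * X)\<^sup>2"
  proof -
    have "y\<^sup>2 = \<mu>\<^sup>2 * Ie" unfolding y_def using e0 by (simp add: power_mult_distrib)
    also have "\<dots> \<le> \<mu>\<^sup>2 * (h\<^sup>2 / 6 * (T\<^sup>2 / 2 * X2))" by (rule mult_left_mono[OF ie]) simp
    also have "\<dots> = (k * X)\<^sup>2" unfolding k_def using X0 by (simp add: power_mult_distrib power_divide)
    finally show ?thesis .
  qed
  then have ykX: "y \<le> k * X" using power2_le_imp_le[of y "k * X"] k0 X0 by simp
  have fe2: "\<mu> * \<bar>Ife\<bar> \<le> X * y" unfolding y_def using mult_left_mono[OF fe, of \<mu>] mu by (simp add: algebra_simps)
  have fe3: "\<mu> * Ife \<le> X * y" using mult_left_mono[OF abs_ge_self[of Ife], of \<mu>] mu fe2 by linarith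
  have fe4: "- (\<mu> * Ife) \<le> X * y" using mult_left_mono[OF abs_ge_minus_self[of Ife], of \<mu>] mu fe2 by simp
  have Iq_lo: "(X - y)\<^sup>2 \<le> Iq2"
  proof -
    have "2 * \<mu> * Ife \<le> 2 * (X * y)" using fe3 by linarith
    moreover have "\<mu>\<^sup>2 * Ie = y\<^sup>2" unfolding y_def using e0 by (simp add: power_mult_distrib)
    ultimately show ?thesis unfolding Iq using X0 by (simp add: power2_eq_square algebra_simps)
  qed
  have Iq_hi: "Iq2 \<le> (X + y)\<^sup>2"
  proof -
    have "- 2 * \<mu> * Ife \<le> 2 * (X * y)" using fe4 by linarith
    moreover have "\<mu>\<^sup>2 * Ie = y\<^sup>2" unfolding y_def using e0 by (simp add: power_mult_distrib)
    ultimately show ?thesis unfolding Iq using X0 by (simp add: power2_eq_square algebra_simps)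
  qed
  have Xy: "X - y \<ge> X * (1 - k)" using ykX by (simp add: algebra_simps)
  have "X * (1 - k) > 0" using Xpos k_lt by simp
  then have Xy0: "X - y > 0" using Xy by linarith
  have "(X - y)\<^sup>2 > 0" using Xy0 by simp
  then have Iqpos: "Iq2 > 0" using Iq_lo by linarith
  have sq_hi: "sqrt Iq2 \<le> X + y" by (rule sqrt_le_of_sq) (use Iq_hi X0 y0 in simp_all)
  have sq_pos: "sqrt Iq2 > 0" using Iqpos by simp
  have num_lo: "X * (X - y) \<le> X2 - \<mu> * Ife"
  proof -
    have "\<mu> * Ife \<le> X * y" using fe3 .
    then show ?thesis using X0 by (simp add: power2_eq_square algebra_simps)
  qed
  have R1: "X * (X - y) / (X + y) \<le> (X2 - \<mu> * Ife) / sqrt Iq2"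
  proof -
    have "X * (X - y) / (X + y) \<le> X * (X - y) / sqrt Iq2"
      by (rule divide_left_mono[OF sq_hi]) (use X0 Xy0 sq_pos y0 Xpos in \<open>auto intro!: mult_pos_pos\<close>)
    also have "\<dots> \<le> (X2 - \<mu> * Ife) / sqrt Iq2" by (rule divide_right_mono[OF num_lo]) (use sq_pos in simp)
    finally show ?thesis .
  qed
  have R2: "X * (1 - k) / (1 + k) \<le> X * (X - y) / (X + y)"
  proof (rule fle)
    show "0 < 1 + k" using k0 by simp
    show "0 < X + y" using Xpos y0 by simp
    have "(X - y) * (1 + k) - (1 - k) * (X + y) = 2 * (k * X - y)" by (simp add: algebra_simps)
    then have "(1 - k) * (X + y) \<le> (X - y) * (1 + k)" using ykX by simp
    then show "X * (1 - k) * (X + y) \<le> X * (X - y) * (1 + k)"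
      using mult_left_mono[of "(1 - k) * (X + y)" "(X - y) * (1 + k)" X] X0 by (simp add: mult.assoc)
  qed
  have "c * N \<le> c * (X * (1 + s / sqrt 2))" using NX c0 by simp
  also have "\<dots> = X * (c * (1 + s / sqrt 2))" by simp
  also have "\<dots> \<le> X * ((1 - k) / (1 + k))" by (rule mult_left_mono[OF num X0(1)])
  also have "\<dots> = X * (1 - k) / (1 + k)" by simp
  finally have "c * N \<le> (X2 - \<mu> * Ife) / sqrt Iq2" using R1 R2 by linarith
  moreover have "c = 2 * pi\<^sup>2 / ((2 + sqrt \<mu> * T)\<^sup>2 * (pi\<^sup>2 + 4 * \<mu> * T\<^sup>2))"
    unfolding c_def using s0 by (simp add: s_def mult.assoc)
  ultimately show ?thesis using Iqpos unfolding N_def by simp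
qed

lemma zero_deriv_int:
  fixes w r :: "real \<Rightarrow> real"
  assumes dw: "\<And>t. t \<in> {0..T} \<Longrightarrow> (w has_real_derivative r t) (at t within {0..T})"
    and z: "\<forall>t\<in>{0..T}. w t = 0"
  shows "integral {0..T} (\<lambda>t. (r t)\<^sup>2) = 0"
proof -
  have "integral {0..T} (\<lambda>t. (r t)\<^sup>2) = integral {0..T} (\<lambda>t. 0)"
  proof (rule integral_spike[of "{0, T}"])
    fix x assume x: "x \<in> {0..T} - {0, T}"
    then have x1: "0 < x" "x < T" "x \<in> {0..T}" by auto
    have d1: "(w has_real_derivative r x) (at x)" by (rule deriv_interior[OF dw[OF x1(3)] x1(1,2)])
    have d0: "((\<lambda>_. 0) has_real_derivative 0) (at x)" by simp
    have d2: "(w has_real_derivative 0) (at x)"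
      by (rule has_field_derivative_transform_within_open[OF d0, of "{0<..<T}"]) (use x1 z in auto)
    have "r x = 0" by (rule DERIV_unique[OF d1 d2])
    then show "0 = (r x)\<^sup>2" by simp
  qed auto
  then show ?thesis by simp
qed

context msetup
begin

lemma q_eq: "q t = f t - \<mu> * e t" unfolding q_def f_def e_def by (simp add: algebra_simps)
lemma p_eq: "p t = f t - \<mu> * U t" unfolding f_def by simp

lemma int3:
  fixes g1 g2 g3 :: "real \<Rightarrow> real"
  assumes "continuous_on {0..T} g1" "continuous_on {0..T} g2" "continuous_on {0..T} g3"
  shows "integral {0..T} (\<lambda>t. x * g1 t + y * g2 t + z * g3 t) = x * integral {0..T} g1 + y * integral {0..T} g2 + z * integral {0..T} g3"
proof -
  have i: "g1 integrable_on {0..T}" "g2 integrable_on {0..T}" "g3 integrable_on {0..T}" using assms by (auto intro: icont)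
  have "integral {0..T} (\<lambda>t. x * g1 t + y * g2 t + z * g3 t) = integral {0..T} (\<lambda>t. x * g1 t + y * g2 t) + integral {0..T} (\<lambda>t. z * g3 t)"
    by (rule integral_add) (use i in \<open>auto intro!: integrable_add integrable_on_mult_right\<close>)
  also have "integral {0..T} (\<lambda>t. x * g1 t + y * g2 t) = integral {0..T} (\<lambda>t. x * g1 t) + integral {0..T} (\<lambda>t. y * g2 t)"
    by (rule integral_add) (use i in \<open>auto intro!: integrable_add integrable_on_mult_right\<close>)
  finally show ?thesis by simp
qed

lemma Ifq: "integral {0..T} (\<lambda>t. f t * q t) = X2 - \<mu> * integral {0..T} (\<lambda>t. f t * e t)"
proof -
  have "integral {0..T} (\<lambda>t. f t * q t) = integral {0..T} (\<lambda>t. 1 * (f t)\<^sup>2 + (- \<mu>) * (f t * e t) + 0 * (e t)\<^sup>2)"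
    unfolding q_eq by (rule integral_cong) (simp add: power2_eq_square algebra_simps)
  also have "\<dots> = X2 - \<mu> * integral {0..T} (\<lambda>t. f t * e t)" unfolding X2_def
    by (subst int3) (use fc ec in \<open>auto intro!: continuous_intros\<close>)
  finally show ?thesis .
qed

lemma Iq2: "integral {0..T} (\<lambda>t. (q t)\<^sup>2) = X2 - 2 * \<mu> * integral {0..T} (\<lambda>t. f t * e t) + \<mu>\<^sup>2 * integral {0..T} (\<lambda>t. (e t)\<^sup>2)"
proof -
  have "integral {0..T} (\<lambda>t. (q t)\<^sup>2) = integral {0..T} (\<lambda>t. 1 * (f t)\<^sup>2 + (- 2 * \<mu>) * (f t * e t) + \<mu>\<^sup>2 * (e t)\<^sup>2)"
    unfolding q_eq by (rule integral_cong) (simp add: power2_eq_square algebra_simps)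
  also have "\<dots> = X2 - 2 * \<mu> * integral {0..T} (\<lambda>t. f t * e t) + \<mu>\<^sup>2 * integral {0..T} (\<lambda>t. (e t)\<^sup>2)" unfolding X2_def
    by (subst int3) (use fc ec in \<open>auto intro!: continuous_intros\<close>)
  finally show ?thesis .
qed

lemma Ip2: "integral {0..T} (\<lambda>t. (p t)\<^sup>2) = X2 - 2 * \<mu> * integral {0..T} (\<lambda>t. f t * U t) + \<mu>\<^sup>2 * integral {0..T} (\<lambda>t. (U t)\<^sup>2)"
proof -
  have "integral {0..T} (\<lambda>t. (p t)\<^sup>2) = integral {0..T} (\<lambda>t. 1 * (f t)\<^sup>2 + (- 2 * \<mu>) * (f t * U t) + \<mu>\<^sup>2 * (U t)\<^sup>2)"
    by (rule integral_cong) (simp add: f_def power2_eq_square algebra_simps)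
  also have "\<dots> = X2 - 2 * \<mu> * integral {0..T} (\<lambda>t. f t * U t) + \<mu>\<^sup>2 * integral {0..T} (\<lambda>t. (U t)\<^sup>2)" unfolding X2_def
    by (subst int3) (use fc Uc in \<open>auto intro!: continuous_intros\<close>)
  finally show ?thesis .
qed

lemma cs_fe: "(integral {0..T} (\<lambda>t. f t * e t))\<^sup>2 \<le> X2 * integral {0..T} (\<lambda>t. (e t)\<^sup>2)"
  unfolding X2_def by (rule cs_int[OF fc ec])
lemma cs_fU: "(integral {0..T} (\<lambda>t. f t * U t))\<^sup>2 \<le> X2 * integral {0..T} (\<lambda>t. (U t)\<^sup>2)"
  unfolding X2_def by (rule cs_int[OF fc Uc])

lemma ratio_bound:
  assumes w: "w \<in> Vh0 T l eta"
  shows "bilin_a T \<mu> u (HT T w) / H1semi T w \<le> sqrt X2"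
proof -
  obtain r where dw: "\<forall>t\<in>{0..T}. (w has_real_derivative r t) (at t within {0..T})" and rc: "continuous_on {0..T} r"
    using w unfolding Vh0_def S2h_def C1_on_def by blast
  have a: "bilin_a T \<mu> u (HT T w) = integral {0..T} (\<lambda>t. f t * r t)"
    unfolding f_def U_def by (rule bilin_eq[OF _ du pc _ rc]) (use T dw in auto)
  have H: "H1semi T w = sqrt (integral {0..T} (\<lambda>t. (r t)\<^sup>2))" by (rule H1semi_eq) (use dw in auto)
  define R where "R = integral {0..T} (\<lambda>t. (r t)\<^sup>2)"
  have R0: "R \<ge> 0" unfolding R_def by (rule HK_nonneg, rule icont) (use rc in \<open>auto intro!: continuous_intros\<close>)
  have cs: "(integral {0..T} (\<lambda>t. f t * r t))\<^sup>2 \<le> X2 * R" unfolding X2_def R_def by (rule cs_int[OF fc rc])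
  have "integral {0..T} (\<lambda>t. f t * r t) \<le> sqrt X2 * sqrt R"
    using sq_le_sqrt[OF cs] by (simp add: real_sqrt_mult)
  show ?thesis
  proof (cases "R = 0")
    case True then show ?thesis unfolding a H R_def[symmetric] using X2_nonneg by simp
  next
    case False
    then have "sqrt R > 0" using R0 by simp
    then show ?thesis unfolding a H R_def[symmetric]
      using \<open>integral {0..T} (\<lambda>t. f t * r t) \<le> sqrt X2 * sqrt R\<close> by (simp add: divide_le_eq)
  qed
qed

lemma bdd: "bdd_above {bilin_a T \<mu> u (HT T w) / H1semi T w | w. w \<in> Vh0 T l eta \<and> (\<exists>t\<in>{0..T}. w t \<noteq> 0)}"
  by (rule bdd_aboveI[of _ "sqrt X2"]) (use ratio_bound in auto)

lemma mesh_pos: "mesh l eta \<ge> 0"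
  using mesh_ge[of 0 l eta] part_lt[OF part, of 0] by simp

lemma main_pos:
  assumes hm: "mesh l eta \<le> pi\<^sup>2 / (sqrt 2 * (2 + sqrt \<mu> * T) * \<mu> * T)"
    and Ip0: "integral {0..T} (\<lambda>t. (p t)\<^sup>2) > 0"
  shows "2 * pi\<^sup>2 / ((2 + sqrt \<mu> * T)\<^sup>2 * (pi\<^sup>2 + 4 * \<mu> * T\<^sup>2)) * H1semi T u
         \<le> Sup {bilin_a T \<mu> u (HT T w) / H1semi T w | w. w \<in> Vh0 T l eta \<and> (\<exists>t\<in>{0..T}. w t \<noteq> 0)}"
proof -
  define Ie where "Ie = integral {0..T} (\<lambda>t. (e t)\<^sup>2)"
  define IU2 where "IU2 = integral {0..T} (\<lambda>t. (U t)\<^sup>2)"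
  have Ie0: "Ie \<ge> 0" unfolding Ie_def by (rule HK_nonneg, rule icont) (use ec in \<open>auto intro!: continuous_intros\<close>)
  have IU0: "IU2 \<ge> 0" unfolding IU2_def by (rule HK_nonneg, rule icont) (use Uc in \<open>auto intro!: continuous_intros\<close>)
  have ie: "Ie \<le> (mesh l eta)\<^sup>2 / 6 * (T\<^sup>2 / 2 * X2)"
  proof -
    have "Ie \<le> (mesh l eta)\<^sup>2 / 6 * integral {0..T} (\<lambda>t. (u t)\<^sup>2)" unfolding Ie_def by (rule I_e)
    also have "\<dots> \<le> (mesh l eta)\<^sup>2 / 6 * (T\<^sup>2 / 2 * X2)" by (rule mult_left_mono[OF E2]) simp
    finally show ?thesis .
  qed
  have fa: "integral {0..T} (\<lambda>t. (q t)\<^sup>2) > 0 \<and>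
     2 * pi\<^sup>2 / ((2 + sqrt \<mu> * T)\<^sup>2 * (pi\<^sup>2 + 4 * \<mu> * T\<^sup>2)) * sqrt (integral {0..T} (\<lambda>t. (p t)\<^sup>2))
     \<le> (X2 - \<mu> * integral {0..T} (\<lambda>t. f t * e t)) / sqrt (integral {0..T} (\<lambda>t. (q t)\<^sup>2))"
    by (rule final_alg[OF X2_nonneg Ie0 IU0 mu T mesh_pos cs_fe[folded Ie_def] cs_fU[folded IU2_def] ie E3[folded IU2_def]
          mesh_le_T[OF part] hm Ip2[unfolded IU2_def[symmetric]] Ip0 Iq2[unfolded Ie_def[symmetric]]])
  have vnz: "\<exists>t\<in>{0..T}. v t \<noteq> 0"
  proof (rule ccontr)
    assume "\<not> (\<exists>t\<in>{0..T}. v t \<noteq> 0)"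
    then have "integral {0..T} (\<lambda>t. (q t)\<^sup>2) = 0" by (intro zero_deriv_int[OF dv]) auto
    then show False using fa by simp
  qed
  have mem: "bilin_a T \<mu> u (HT T v) / H1semi T v \<in> {bilin_a T \<mu> u (HT T w) / H1semi T w | w. w \<in> Vh0 T l eta \<and> (\<exists>t\<in>{0..T}. w t \<noteq> 0)}"
    using v_in vnz by blast
  have "2 * pi\<^sup>2 / ((2 + sqrt \<mu> * T)\<^sup>2 * (pi\<^sup>2 + 4 * \<mu> * T\<^sup>2)) * H1semi T u \<le> bilin_a T \<mu> u (HT T v) / H1semi T v"
    unfolding H1_u a_v H1_v Ifq using fa by simp
  also have "\<dots> \<le> Sup {bilin_a T \<mu> u (HT T w) / H1semi T w | w. w \<in> Vh0 T l eta \<and> (\<exists>t\<in>{0..T}. w t \<noteq> 0)}"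
    by (rule cSup_upper[OF mem bdd])
  finally show ?thesis .
qed

lemma main_zero: "0 \<le> Sup {bilin_a T \<mu> u (HT T w) / H1semi T w | w. w \<in> Vh0 T l eta \<and> (\<exists>t\<in>{0..T}. w t \<noteq> 0)}"
proof -
  define \<sigma> :: real where "\<sigma> = (if integral {0..T} f \<ge> 0 then 1 else -1)"
  define w where "w = (\<lambda>t::real. \<sigma> * t)"
  have s2: "\<sigma>\<^sup>2 = 1" unfolding \<sigma>_def by simp
  have dw: "(w has_real_derivative \<sigma>) (at t within {0..T})" for t
    unfolding w_def by (auto intro!: derivative_eq_intros)
  have w_in: "w \<in> Vh0 T l eta"
  proof -
    have "C1_on T w" unfolding C1_on_def using dw by (intro exI[of _ "\<lambda>_. \<sigma>"]) auto
    moreover have "\<forall>i\<le>l. \<exists>c0 c1 c2. \<forall>t\<in>{eta i..eta (Suc i)}. w t = c0 + c1 * t + c2 * t ^ 2"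
      unfolding w_def by (intro allI impI exI[of _ 0] exI[of _ \<sigma>]) auto
    ultimately show ?thesis unfolding Vh0_def S2h_def w_def by auto
  qed
  have wnz: "\<exists>t\<in>{0..T}. w t \<noteq> 0" using T unfolding w_def \<sigma>_def by (intro bexI[of _ T]) auto
  have a: "bilin_a T \<mu> u (HT T w) = integral {0..T} (\<lambda>t. f t * \<sigma>)"
    unfolding f_def U_def by (rule bilin_eq[OF _ du pc dw]) (use T in auto)
  have "integral {0..T} (\<lambda>t. f t * \<sigma>) = integral {0..T} f * \<sigma>" by simp
  also have "\<dots> \<ge> 0" unfolding \<sigma>_def by auto
  finally have a0: "bilin_a T \<mu> u (HT T w) \<ge> 0" unfolding a .
  have "H1semi T w = sqrt (integral {0..T} (\<lambda>t. \<sigma>\<^sup>2))" by (rule H1semi_eq) (use dw in auto)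
  then have H: "H1semi T w \<ge> 0" using s2 T by simp
  have mem: "bilin_a T \<mu> u (HT T w) / H1semi T w \<in> {bilin_a T \<mu> u (HT T w) / H1semi T w | w. w \<in> Vh0 T l eta \<and> (\<exists>t\<in>{0..T}. w t \<noteq> 0)}"
    using w_in wnz by blast
  have "0 \<le> bilin_a T \<mu> u (HT T w) / H1semi T w" using a0 H by simp
  also have "\<dots> \<le> Sup {bilin_a T \<mu> u (HT T w) / H1semi T w | w. w \<in> Vh0 T l eta \<and> (\<exists>t\<in>{0..T}. w t \<noteq> 0)}"
    by (rule cSup_upper[OF mem bdd])
  finally show ?thesis .
qed

end

theorem mainTheorem5:
  fixes T \<mu> :: real and l :: nat and eta :: "nat \<Rightarrow> real" and u :: "real \<Rightarrow> real"
  assumes "T > 0" and "\<mu> > 0"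
    and "is_partition T l eta"
    and "mesh l eta \<le> pi\<^sup>2 / (sqrt 2 * (2 + sqrt \<mu> * T) * \<mu> * T)"
    and "u \<in> Vh0 T l eta"
  shows "2 * pi\<^sup>2 / ((2 + sqrt \<mu> * T)\<^sup>2 * (pi\<^sup>2 + 4 * \<mu> * T\<^sup>2)) * H1semi T u
         \<le> Sup {bilin_a T \<mu> u (HT T v) / H1semi T v | v. v \<in> Vh0 T l eta \<and> (\<exists>t\<in>{0..T}. v t \<noteq> 0)}"
proof -
  obtain p where du: "\<forall>t\<in>{0..T}. (u has_real_derivative p t) (at t within {0..T})"
    and pc: "continuous_on {0..T} p"
    and upoly: "\<forall>i\<le>l. \<exists>c0 c1 c2. \<forall>t\<in>{eta i..eta (Suc i)}. u t = c0 + c1 * t + c2 * t ^ 2"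
    and u0: "u 0 = 0"
    using assms(5) unfolding Vh0_def S2h_def C1_on_def by blast
  interpret M: msetup T \<mu> l eta u p
    by unfold_locales (use assms du pc upoly u0 in auto)
  show ?thesis
  proof (cases "integral {0..T} (\<lambda>t. (p t)\<^sup>2) > 0")
    case True
    show ?thesis by (rule M.main_pos[OF assms(4) True])
  next
    case False
    have "integral {0..T} (\<lambda>t. (p t)\<^sup>2) \<ge> 0"
      by (rule HK_nonneg, rule icont) (use pc in \<open>auto intro!: continuous_intros\<close>)
    then have "integral {0..T} (\<lambda>t. (p t)\<^sup>2) = 0" using False by simp
    then have "H1semi T u = 0" unfolding M.H1_u by simp
    then show ?thesis using M.main_zero by simp
  qed
qed

end
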